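(* Let $d\ge1$, $p>0$, $\alpha\in(0,2)$, $T>0$, and let $\sigma,Q(\cdot\mid u),M,Q$ be as in the context. Let $T_1$ be uniform on $(0,T)$, $E_1$ standard exponential, $U_1$ uniform on $(0,1)$ and $V_1$ a random vector with law $Q/\|\sigma\|$, all independent. For $s>0$ set $$H(s;(V_1,E_1,U_1)):=\left(\left(\frac{\alpha s}{\|\sigma\|T}\right)^{-1/\alpha}\wedge\frac{E_1^{1/p}U_1^{1/\alpha}}{\|V_1\|^{1/p}}\right)\frac{V_1}{\|V_1\|}.$$ Then for every $t\in[0,T]$ and every Borel set $A\subset\mathbb{R}^d$ with $0\notin \overline{A}$, $$\int_0^\infty\mathbb{P}\Bigl[\mathbf{1}_{(0,t]}(T_1)\,H(s;(V_1,E_1,U_1))\in A\Bigr]\,ds=t\,M(A).$$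
   Context: $\mathbb{S}^{d-1}$ is the unit sphere in $\mathbb{R}^d$; $\sigma$ is a finite nonzero Borel measure on it with $\|\sigma\|:=\sigma(\mathbb{S}^{d-1})$; $\{Q(\cdot\mid u)\}_{u\in\mathbb{S}^{d-1}}$ is a measurable family of Borel probability measures on $(0,\infty)$ and $q(r,u):=\int_{(0,\infty)}e^{-rs}Q(ds\mid u)$. The Lévy measure is $M(A):=\int_{\mathbb{S}^{d-1}}\int_0^\infty\mathbf{1}_A(ru)\,q(r^p,u)\,r^{-\alpha-1}\,dr\,\sigma(du)$, and $Q(A):=\int_{\mathbb{S}^{d-1}}\int_{(0,\infty)}\mathbf{1}_A(su)\,Q(ds\mid u)\,\sigma(du)$ for Borel $A\subset\mathbb{R}^d$. *)

theory Defs
  imports "HOL-Probability.Probability"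
begin

definition qlap :: "('a \<Rightarrow> real measure) \<Rightarrow> real \<Rightarrow> 'a \<Rightarrow> real" where
  "qlap Qk r u = (\<integral>s. exp (- r * s) \<partial>(Qk u))"

definition levyM :: "'a::euclidean_space measure \<Rightarrow> ('a \<Rightarrow> real measure) \<Rightarrow> real \<Rightarrow> real \<Rightarrow> 'a set \<Rightarrow> ennreal" where
  "levyM \<sigma> Qk p \<alpha> A =
     (\<integral>\<^sup>+ u. (\<integral>\<^sup>+ r\<in>{0<..}. indicator A (r *\<^sub>R u) * ennreal (qlap Qk (r powr p) u * r powr (- \<alpha> - 1)) \<partial>lborel) \<partial>\<sigma>)"

definition Qfun :: "'a::euclidean_space measure \<Rightarrow> ('a \<Rightarrow> real measure) \<Rightarrow> 'a set \<Rightarrow> ennreal" where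
  "Qfun \<sigma> Qk A = (\<integral>\<^sup>+ u. (\<integral>\<^sup>+ s. indicator A (s *\<^sub>R u) \<partial>(Qk u)) \<partial>\<sigma>)"

definition Qnormalized :: "'a::euclidean_space measure \<Rightarrow> ('a \<Rightarrow> real measure) \<Rightarrow> 'a measure" where
  "Qnormalized \<sigma> Qk = measure_of UNIV (sets borel) (\<lambda>A. Qfun \<sigma> Qk A / ennreal (measure \<sigma> (space \<sigma>)))"

definition Hfun :: "real \<Rightarrow> real \<Rightarrow> real \<Rightarrow> real \<Rightarrow> real \<Rightarrow> 'a::euclidean_space \<Rightarrow> real \<Rightarrow> real \<Rightarrow> 'a" where
  "Hfun \<alpha> p T normsig s v e u =
     (min ((\<alpha> * s / (normsig * T)) powr (- 1 / \<alpha>))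
          (e powr (1 / p) * u powr (1 / \<alpha>) / norm v powr (1 / p))) *\<^sub>R (v /\<^sub>R norm v)"

end

theory Submission
  imports Defs
begin


lemma expsub:
  fixes f :: "real \<Rightarrow> ennreal"
  assumes [measurable]: "f \<in> borel_measurable borel"
  shows "(\<integral>\<^sup>+s. f s * indicator {0<..} s \<partial>lborel) = (\<integral>\<^sup>+y. f (exp y) * ennreal (exp y) \<partial>lborel)"
proof -
  define F where "F n x = f x * indicator {exp (- real (Suc n))..exp (real (Suc n))} x" for n x
  define G where "G n y = f (exp y) * ennreal (exp y) * indicator {- real (Suc n)..real (Suc n)} y" for n y
  have eq: "integral\<^sup>N lborel (F n) = integral\<^sup>N lborel (G n)" for n
    unfolding F_def G_def
    by (rule nn_integral_substitution_aux) (auto intro!: derivative_eq_intros continuous_intros)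
  have incF: "incseq F"
    unfolding F_def apply (intro incseq_SucI le_funI mult_left_mono) apply (auto split: split_indicator)
    apply (smt (verit) exp_le_cancel_iff)+ done
  have incG: "incseq G"
    unfolding G_def by (intro incseq_SucI le_funI mult_left_mono) (auto split: split_indicator)
  have supF: "(SUP n. F n x) = f x * indicator {0<..} x" for x
  proof (cases "x > 0")
    case True
    obtain N :: nat where N: "\<bar>ln x\<bar> < real N" using reals_Archimedean2 by blast
    have "exp (- real (Suc N)) \<le> exp (ln x)" "exp (ln x) \<le> exp (real (Suc N))"
      using N by auto
    then have "x \<in> {exp (- real (Suc N))..exp (real (Suc N))}" using True by simp
    show ?thesis
    proof (rule antisym)
      show "(SUP n. F n x) \<le> f x * indicator {0<..} x"
        by (rule SUP_least) (auto simp: F_def True split: split_indicator)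
      show "f x * indicator {0<..} x \<le> (SUP n. F n x)"
        by (rule SUP_upper2[of N]) (use True \<open>x \<in> _\<close> in \<open>auto simp: F_def\<close>)
    qed
  next
    case False
    have "x \<notin> {exp (- real (Suc n))..exp (real (Suc n))}" for n
      using False exp_gt_zero[of "- real (Suc n)"] by (simp del: exp_gt_zero) 
    then show ?thesis using False by (simp add: F_def)
  qed
  have supG: "(SUP n. G n y) = f (exp y) * ennreal (exp y)" for y
  proof (rule antisym)
    show "(SUP n. G n y) \<le> f (exp y) * ennreal (exp y)"
      by (rule SUP_least) (auto simp: G_def split: split_indicator)
    obtain N :: nat where N: "\<bar>y\<bar> < real N" using reals_Archimedean2 by blast
    show "f (exp y) * ennreal (exp y) \<le> (SUP n. G n y)"
      by (rule SUP_upper2[of N]) (use N in \<open>auto simp: G_def split: split_indicator\<close>)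
  qed
  have "(\<integral>\<^sup>+s. f s * indicator {0<..} s \<partial>lborel) = (\<integral>\<^sup>+s. (SUP n. F n s) \<partial>lborel)"
    by (simp add: supF)
  also have "\<dots> = (SUP n. integral\<^sup>N lborel (F n))"
    by (rule nn_integral_monotone_convergence_SUP[OF incF]) (unfold F_def[abs_def], measurable)
  also have "\<dots> = (SUP n. integral\<^sup>N lborel (G n))" by (simp add: eq)
  also have "\<dots> = (\<integral>\<^sup>+s. (SUP n. G n s) \<partial>lborel)"
    by (rule nn_integral_monotone_convergence_SUP[OF incG, symmetric]) (unfold G_def[abs_def], measurable)
  also have "\<dots> = (\<integral>\<^sup>+y. f (exp y) * ennreal (exp y) \<partial>lborel)" by (simp add: supG)
  finally show ?thesis .
qed


lemma powsub:
  fixes h :: "real \<Rightarrow> ennreal"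
  assumes [measurable]: "h \<in> borel_measurable borel" and c: "c > 0" and a: "\<alpha> > 0"
  shows "(\<integral>\<^sup>+s. h ((\<alpha> * s / c) powr (- 1 / \<alpha>)) * indicator {0<..} s \<partial>lborel)
       = (\<integral>\<^sup>+r. h r * ennreal (c * r powr (- \<alpha> - 1)) * indicator {0<..} r \<partial>lborel)"
proof -
  have "(\<integral>\<^sup>+s. h ((\<alpha> * s / c) powr (- 1 / \<alpha>)) * indicator {0<..} s \<partial>lborel)
      = (\<integral>\<^sup>+y. h ((\<alpha> * exp y / c) powr (- 1 / \<alpha>)) * ennreal (exp y) \<partial>lborel)"
    by (rule expsub) measurable
  also have "\<dots> = ennreal \<bar>-\<alpha>\<bar> * (\<integral>\<^sup>+x. h ((\<alpha> * exp (ln (c/\<alpha>) + (-\<alpha>) * x) / c) powr (- 1 / \<alpha>))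
                     * ennreal (exp (ln (c/\<alpha>) + (-\<alpha>) * x)) \<partial>lborel)"
    by (rule nn_integral_real_affine) (use a in auto)
  also have "\<dots> = (\<integral>\<^sup>+x. h (exp x) * ennreal (c * exp (- \<alpha> * x)) \<partial>lborel)"
  proof -
    have eq1: "(\<alpha> * exp (ln (c/\<alpha>) + (-\<alpha>) * x) / c) powr (- 1 / \<alpha>) = exp x" for x
    proof -
      have "\<alpha> * exp (ln (c/\<alpha>) + (-\<alpha>) * x) / c = exp (- \<alpha> * x)"
        using a c by (simp add: exp_diff exp_minus field_simps)
      then show ?thesis using a by (simp add: powr_def)
    qed
    have eq2: "exp (ln (c/\<alpha>) + (-\<alpha>) * x) = (c/\<alpha>) * exp (- \<alpha> * x)" for x
      using a c by (simp add: exp_diff exp_minus field_simps)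
    have "ennreal \<bar>-\<alpha>\<bar> * (\<integral>\<^sup>+x. h ((\<alpha> * exp (ln (c/\<alpha>) + (-\<alpha>) * x) / c) powr (- 1 / \<alpha>))
                     * ennreal (exp (ln (c/\<alpha>) + (-\<alpha>) * x)) \<partial>lborel)
        = (\<integral>\<^sup>+x. ennreal \<alpha> * (h (exp x) * ennreal ((c/\<alpha>) * exp (- \<alpha> * x))) \<partial>lborel)"
      unfolding eq1 unfolding eq2 using a by (subst nn_integral_cmult) auto
    also have "\<dots> = (\<integral>\<^sup>+x. h (exp x) * ennreal (c * exp (- \<alpha> * x)) \<partial>lborel)"
    proof (rule nn_integral_cong)
      fix x
      have "ennreal \<alpha> * ennreal ((c/\<alpha>) * exp (- \<alpha> * x)) = ennreal (c * exp (- \<alpha> * x))"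
        using a c by (simp add: ennreal_mult[symmetric])
      then show "ennreal \<alpha> * (h (exp x) * ennreal ((c/\<alpha>) * exp (- \<alpha> * x))) = h (exp x) * ennreal (c * exp (- \<alpha> * x))"
        by (metis mult.assoc mult.commute)
    qed
    finally show ?thesis .
  qed
  also have "\<dots> = (\<integral>\<^sup>+x. h (exp x) * ennreal (c * exp x powr (- \<alpha> - 1)) * ennreal (exp x) \<partial>lborel)"
  proof (rule nn_integral_cong)
    fix x
    have "ennreal (c * exp x powr (- \<alpha> - 1)) * ennreal (exp x) = ennreal (c * exp (- \<alpha> * x))"
      using c by (simp add: ennreal_mult[symmetric] powr_def exp_add[symmetric] algebra_simps)
    then show "h (exp x) * ennreal (c * exp (- \<alpha> * x)) = h (exp x) * ennreal (c * exp x powr (- \<alpha> - 1)) * ennreal (exp x)"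
      by (simp add: mult.assoc)
  qed
  also have "\<dots> = (\<integral>\<^sup>+r. h r * ennreal (c * r powr (- \<alpha> - 1)) * indicator {0<..} r \<partial>lborel)"
    by (rule expsub[symmetric]) measurable
  finally show ?thesis .
qed


lemma maxsplit:
  fixes f :: "real \<Rightarrow> ennreal"
  assumes [measurable]: "f \<in> borel_measurable borel" and b: "b > 0"
  shows "(\<integral>\<^sup>+s. f (max s b) * indicator {0<..} s \<partial>lborel)
       = ennreal b * f b + (\<integral>\<^sup>+s. f s * indicator {b<..} s \<partial>lborel)"
proof -
  have "(\<integral>\<^sup>+s. f (max s b) * indicator {0<..} s \<partial>lborel)
     = (\<integral>\<^sup>+s. f b * indicator {0<..b} s + f s * indicator {b<..} s \<partial>lborel)"
    using b by (intro nn_integral_cong) (auto split: split_indicator simp: max_def)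
  also have "\<dots> = (\<integral>\<^sup>+s. f b * indicator {0<..b} s \<partial>lborel) + (\<integral>\<^sup>+s. f s * indicator {b<..} s \<partial>lborel)"
    by (rule nn_integral_add) auto
  also have "(\<integral>\<^sup>+s. f b * indicator {0<..b} s \<partial>lborel) = ennreal b * f b"
    using b by (simp add: nn_integral_cmult_indicator mult.commute)
  finally show ?thesis .
qed

lemma recipsub:
  fixes f :: "real \<Rightarrow> ennreal"
  assumes [measurable]: "f \<in> borel_measurable borel" and a: "a > 0"
  shows "(\<integral>\<^sup>+u. indicator {0<..<1} u * (ennreal (a / u) * f (a / u)) \<partial>lborel)
       = (\<integral>\<^sup>+s. f s * indicator {a<..} s * ennreal (a / s) \<partial>lborel)"
proof -
  have "(\<integral>\<^sup>+u. indicator {0<..<1} u * (ennreal (a / u) * f (a / u)) \<partial>lborel)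
     = (\<integral>\<^sup>+u. (indicator {..<1} u * (ennreal (a / u) * f (a / u))) * indicator {0<..} u \<partial>lborel)"
    by (intro nn_integral_cong) (auto split: split_indicator)
  also have "\<dots> = (\<integral>\<^sup>+y. (indicator {..<1} (exp y) * (ennreal (a / exp y) * f (a / exp y))) * ennreal (exp y) \<partial>lborel)"
    by (rule expsub) measurable
  also have "\<dots> = (\<integral>\<^sup>+y. indicator {..<0} y * ennreal a * f (a * exp (- y)) \<partial>lborel)"
  proof (intro nn_integral_cong)
    fix y
    have "ennreal (a / exp y) * ennreal (exp y) = ennreal a"
      using a by (simp add: ennreal_mult[symmetric])
    moreover have "a / exp y = a * exp (- y)" by (simp add: exp_minus field_simps)
    ultimately show "(indicator {..<1} (exp y) * (ennreal (a / exp y) * f (a / exp y))) * ennreal (exp y)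
        = indicator {..<0} y * ennreal a * f (a * exp (- y))"
      by (auto split: split_indicator) (metis mult.assoc mult.commute)
  qed
  also have "\<dots> = ennreal \<bar>-1\<bar> * (\<integral>\<^sup>+x. indicator {..<0} (ln a + (-1) * x) * ennreal a * f (a * exp (- (ln a + (-1) * x))) \<partial>lborel)"
    by (rule nn_integral_real_affine) auto
  also have "\<dots> = (\<integral>\<^sup>+x. f (exp x) * indicator {a<..} (exp x) * ennreal (a / exp x) * ennreal (exp x) \<partial>lborel)"
  proof (simp, intro nn_integral_cong)
    fix x
    have "ennreal (a / exp x) * ennreal (exp x) = ennreal a"
      using a by (simp add: ennreal_mult[symmetric])
    moreover have "a * exp (x - ln a) = exp x" using a by (simp add: exp_diff)
    moreover have "(ln a < x) = (a < exp x)" using a by (metis exp_less_cancel_iff exp_ln)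
    ultimately show "indicator {..<0} (ln a - x) * ennreal a * f (a * exp (x - ln a))
        = f (exp x) * indicator {a<..} (exp x) * ennreal (a / exp x) * ennreal (exp x)"
      by (auto split: split_indicator) (metis mult.assoc mult.commute)
  qed
  also have "\<dots> = (\<integral>\<^sup>+s. (f s * indicator {a<..} s * ennreal (a / s)) * indicator {0<..} s \<partial>lborel)"
    by (rule expsub[symmetric]) measurable
  also have "\<dots> = (\<integral>\<^sup>+s. f s * indicator {a<..} s * ennreal (a / s) \<partial>lborel)"
    using a by (intro nn_integral_cong) (auto split: split_indicator)
  finally show ?thesis .
qed


lemma pred_in_greaterThan[measurable (raw)]:
  fixes f g :: "'b \<Rightarrow> real"
  shows "f \<in> borel_measurable M \<Longrightarrow> g \<in> borel_measurable M \<Longrightarrow> Measurable.pred M (\<lambda>x. f x \<in> {g x<..})"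
  by simp

lemma uavg:
  fixes f :: "real \<Rightarrow> ennreal"
  assumes [measurable]: "f \<in> borel_measurable borel" and a: "a > 0"
  shows "(\<integral>\<^sup>+u. indicator {0<..<1} u * (\<integral>\<^sup>+s. f (max s (a / u)) * indicator {0<..} s \<partial>lborel) \<partial>lborel)
       = (\<integral>\<^sup>+s. f s * indicator {a<..} s \<partial>lborel)"
proof -
  have "(\<integral>\<^sup>+u. indicator {0<..<1} u * (\<integral>\<^sup>+s. f (max s (a / u)) * indicator {0<..} s \<partial>lborel) \<partial>lborel)
      = (\<integral>\<^sup>+u. indicator {0<..<1} u * (ennreal (a / u) * f (a / u))
              + (\<integral>\<^sup>+s. indicator {0<..<1} u * (f s * indicator {a / u<..} s) \<partial>lborel) \<partial>lborel)"
  proof (intro nn_integral_cong)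
    fix u :: real
    show "indicator {0<..<1} u * (\<integral>\<^sup>+s. f (max s (a / u)) * indicator {0<..} s \<partial>lborel)
      = indicator {0<..<1} u * (ennreal (a / u) * f (a / u))
              + (\<integral>\<^sup>+s. indicator {0<..<1} u * (f s * indicator {a / u<..} s) \<partial>lborel)"
    proof (cases "u \<in> {0<..<1}")
      case True
      then have "a / u > 0" using a by auto
      with True show ?thesis by (simp add: maxsplit)
    qed simp
  qed
  also have "\<dots> = (\<integral>\<^sup>+u. indicator {0<..<1} u * (ennreal (a / u) * f (a / u)) \<partial>lborel)
       + (\<integral>\<^sup>+u. (\<integral>\<^sup>+s. indicator {0<..<1} u * (f s * indicator {a / u<..} s) \<partial>lborel) \<partial>lborel)"
    by (rule nn_integral_add) measurable
  also have "(\<integral>\<^sup>+u. (\<integral>\<^sup>+s. indicator {0<..<1} u * (f s * indicator {a / u<..} s) \<partial>lborel) \<partial>lborel)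
      = (\<integral>\<^sup>+s. (\<integral>\<^sup>+u. indicator {0<..<1} u * (f s * indicator {a / u<..} s) \<partial>lborel) \<partial>lborel)"
    by (rule lborel_pair.Fubini') measurable
  also have "\<dots> = (\<integral>\<^sup>+s. f s * indicator {a<..} s * ennreal (1 - a / s) \<partial>lborel)"
  proof (intro nn_integral_cong)
    fix s :: real
    have pw: "indicator {0<..<1} u * (f s * indicator {a / u<..} s)
        = (f s * indicator {a<..} s) * indicator {a / s<..<1} u" for u :: real
    proof (cases "s > a")
      case True
      have "(u \<in> {0<..<1} \<and> a / u < s) = (u \<in> {a / s<..<1})"
      proof
        assume "u \<in> {0<..<1} \<and> a / u < s"
        then show "u \<in> {a / s<..<1}" using a True by (auto simp: field_simps)
      next
        assume h: "u \<in> {a / s<..<1}"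
        have "0 < a / s" using a True by auto
        then have "u > 0" using h by auto
        then show "u \<in> {0<..<1} \<and> a / u < s" using h a True by (auto simp: field_simps)
      qed
      then show ?thesis using True by (auto split: split_indicator)
    next
      case False
      have "\<not> (u \<in> {0<..<1} \<and> a / u < s)"
      proof
        assume h: "u \<in> {0<..<1} \<and> a / u < s"
        then have "a < a / u" using a by (auto simp: field_simps)
        then show False using h False by auto
      qed
      then show ?thesis using False by (auto split: split_indicator)
    qed
    show "(\<integral>\<^sup>+u. indicator {0<..<1} u * (f s * indicator {a / u<..} s) \<partial>lborel)
        = f s * indicator {a<..} s * ennreal (1 - a / s)"
    proof (cases "s > a")
      case True
      have "a / s \<le> 1" using True a by auto
      then show ?thesis unfolding pw by (simp add: nn_integral_cmult_indicator)
    next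
      case False
      then show ?thesis unfolding pw by simp
    qed
  qed
  also have "(\<integral>\<^sup>+u. indicator {0<..<1} u * (ennreal (a / u) * f (a / u)) \<partial>lborel)
      = (\<integral>\<^sup>+s. f s * indicator {a<..} s * ennreal (a / s) \<partial>lborel)"
    by (rule recipsub) (use a in auto)
  also have "(\<integral>\<^sup>+s. f s * indicator {a<..} s * ennreal (a / s) \<partial>lborel)
      + (\<integral>\<^sup>+s. f s * indicator {a<..} s * ennreal (1 - a / s) \<partial>lborel)
      = (\<integral>\<^sup>+s. f s * indicator {a<..} s * ennreal (a / s) + f s * indicator {a<..} s * ennreal (1 - a / s) \<partial>lborel)"
    by (rule nn_integral_add[symmetric]) measurable
  also have "\<dots> = (\<integral>\<^sup>+s. f s * indicator {a<..} s \<partial>lborel)"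
  proof (intro nn_integral_cong)
    fix s :: real
    show "f s * indicator {a<..} s * ennreal (a / s) + f s * indicator {a<..} s * ennreal (1 - a / s)
        = f s * indicator {a<..} s"
    proof (cases "s > a")
      case True
      then have "ennreal (a / s) + ennreal (1 - a / s) = 1"
        using a by (subst ennreal_plus[symmetric]) auto
      then have "f s * ennreal (a / s) + f s * ennreal (1 - a / s) = f s"
        by (metis distrib_left mult.right_neutral)
      then show ?thesis using True by simp
    qed simp
  qed
  finally show ?thesis .
qed



lemma Rmin:
  fixes c \<alpha> s b :: real
  assumes "c > 0" "\<alpha> > 0" "s > 0" "b > 0"
  shows "min ((\<alpha> * s / c) powr (- 1 / \<alpha>)) ((\<alpha> * b / c) powr (- 1 / \<alpha>)) = (\<alpha> * max s b / c) powr (- 1 / \<alpha>)"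
proof (cases "s \<le> b")
  case True
  have "(\<alpha> * b / c) powr (- 1 / \<alpha>) \<le> (\<alpha> * s / c) powr (- 1 / \<alpha>)"
    using assms True by (intro powr_mono2') (auto simp: divide_right_mono mult_left_mono)
  then show ?thesis using True by (simp add: max_def min_def)
next
  case False
  have "(\<alpha> * s / c) powr (- 1 / \<alpha>) \<le> (\<alpha> * b / c) powr (- 1 / \<alpha>)"
    using assms False by (intro powr_mono2') (auto simp: divide_right_mono mult_left_mono)
  then show ?thesis using False by (simp add: max_def min_def)
qed

lemma RW:
  fixes c \<alpha> p e u S :: real
  assumes "c > 0" "\<alpha> > 0" "p > 0" "e > 0" "u > 0" "S > 0"
  shows "(\<alpha> * ((c / \<alpha>) * (S / e) powr (\<alpha> / p) / u) / c) powr (- 1 / \<alpha>)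
       = e powr (1 / p) * u powr (1 / \<alpha>) / S powr (1 / p)"
proof -
  have "\<alpha> * ((c / \<alpha>) * (S / e) powr (\<alpha> / p) / u) / c = (S / e) powr (\<alpha> / p) / u"
    using assms by (simp add: field_simps)
  then have "(\<alpha> * ((c / \<alpha>) * (S / e) powr (\<alpha> / p) / u) / c) powr (- 1 / \<alpha>)
      = ((S / e) powr (\<alpha> / p)) powr (- 1 / \<alpha>) / u powr (- 1 / \<alpha>)"
    using assms by (simp add: powr_divide powr_mult)
  also have "\<dots> = (S / e) powr (- 1 / p) * u powr (1 / \<alpha>)"
    using assms by (simp add: powr_powr powr_minus_divide divide_simps)
  also have "\<dots> = e powr (1 / p) * u powr (1 / \<alpha>) / S powr (1 / p)"
    using assms by (simp add: powr_divide powr_minus_divide divide_simps)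
  finally show ?thesis .
qed

lemma Rcmp:
  fixes c \<alpha> p e s S :: real
  assumes "c > 0" "\<alpha> > 0" "p > 0" "e > 0" "s > 0" "S > 0"
  shows "((c / \<alpha>) * (S / e) powr (\<alpha> / p) < s) = (S * ((\<alpha> * s / c) powr (- 1 / \<alpha>)) powr p < e)"
proof -
  have l1: "ln ((c / \<alpha>) * (S / e) powr (\<alpha> / p)) = ln c - ln \<alpha> + (\<alpha> / p) * (ln S - ln e)"
    using assms by (simp add: ln_mult ln_div ln_powr)
  have l2: "ln (S * ((\<alpha> * s / c) powr (- 1 / \<alpha>)) powr p) = ln S - (p / \<alpha>) * (ln \<alpha> + ln s - ln c)"
    using assms by (simp add: ln_mult ln_div ln_powr powr_powr field_simps)
  have "((c / \<alpha>) * (S / e) powr (\<alpha> / p) < s) = (ln ((c / \<alpha>) * (S / e) powr (\<alpha> / p)) < ln s)"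
    using assms by (intro ln_less_cancel_iff[symmetric]) auto
  also have "\<dots> = (ln (S * ((\<alpha> * s / c) powr (- 1 / \<alpha>)) powr p) < ln e)"
  proof -
    have "(ln c - ln \<alpha> + (\<alpha> / p) * (ln S - ln e) < ln s) = ((p / \<alpha>) * (ln c - ln \<alpha> + (\<alpha> / p) * (ln S - ln e)) < (p / \<alpha>) * ln s)"
    proof -
      have "0 < p / \<alpha>" using assms by simp
      then show ?thesis by (simp only: mult_less_cancel_left_pos)
    qed
    also have "\<dots> = (ln S - (p / \<alpha>) * (ln \<alpha> + ln s - ln c) < ln e)"
    proof -
      have "(p / \<alpha>) * (ln c - ln \<alpha> + (\<alpha> / p) * (ln S - ln e)) = (ln S - ln e) + (p / \<alpha>) * (ln c - ln \<alpha>)"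
        using assms by (simp add: field_simps)
      moreover have "(p / \<alpha>) * (ln \<alpha> + ln s - ln c) = (p / \<alpha>) * ln s - (p / \<alpha>) * (ln c - ln \<alpha>)"
        by (simp add: algebra_simps)
      ultimately show ?thesis by (smt (verit))
    qed
    finally show ?thesis using l1 l2 by simp
  qed
  also have "\<dots> = (S * ((\<alpha> * s / c) powr (- 1 / \<alpha>)) powr p < e)"
    using assms by (intro ln_less_cancel_iff) auto
  finally show ?thesis .
qed


lemma perv:
  fixes v :: "'a::euclidean_space" and A :: "'a set" and ME :: "real measure"
  assumes A[measurable]: "A \<in> sets borel" and v: "v \<noteq> 0"
    and ns: "ns > 0" and T: "T > 0" and al: "\<alpha> > 0" and p: "p > 0"
    and ME_sets[measurable_cong]: "sets ME = sets borel" and ME_sf: "sigma_finite_measure ME"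
    and ME_pos: "AE e in ME. e > 0"
    and ME_tail: "\<And>x. x \<ge> 0 \<Longrightarrow> emeasure ME {x<..} = ennreal (exp (- x))"
  shows "(\<integral>\<^sup>+e. (\<integral>\<^sup>+u. (\<integral>\<^sup>+s. indicator A (Hfun \<alpha> p T ns s v e u) * indicator {0<..} s \<partial>lborel)
            \<partial>uniform_measure lborel {0<..<1}) \<partial>ME)
    = (\<integral>\<^sup>+r. indicator A (r *\<^sub>R (v /\<^sub>R norm v)) * ennreal (exp (- norm v * r powr p))
            * ennreal (ns * T * r powr (- \<alpha> - 1)) * indicator {0<..} r \<partial>lborel)"
proof -
  define c where "c = ns * T"
  define S where "S = norm v"
  define w where "w = v /\<^sub>R norm v"
  define R where "R s = (\<alpha> * s / c) powr (- 1 / \<alpha>)" for s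
  define f where "f s = (indicator A (R s *\<^sub>R w) :: ennreal)" for s
  define a where "a e = (c / \<alpha>) * (S / e) powr (\<alpha> / p)" for e
  have c: "c > 0" using ns T by (simp add: c_def)
  have S: "S > 0" using v by (simp add: S_def)
  have f_meas[measurable]: "f \<in> borel_measurable borel" unfolding f_def R_def by measurable
  have a_pos: "a e > 0" if "e > 0" for e using that c al S by (simp add: a_def)
  have H_eq: "Hfun \<alpha> p T ns s v e u = R (max s (a e / u)) *\<^sub>R w"
    if "e > 0" "u > 0" "s > 0" for e u s
  proof -
    have "e powr (1 / p) * u powr (1 / \<alpha>) / norm v powr (1 / p) = R (a e / u)"
      unfolding R_def a_def S_def using RW[of c \<alpha> p e u "norm v"] c al p that v by simp
    then have "Hfun \<alpha> p T ns s v e u = min (R s) (R (a e / u)) *\<^sub>R w"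
      unfolding Hfun_def R_def w_def c_def by simp
    also have "min (R s) (R (a e / u)) = R (max s (a e / u))"
      unfolding R_def using Rmin[of c \<alpha> s "a e / u"] c al that a_pos[of e] by simp
    finally show ?thesis .
  qed
  have step1: "(\<integral>\<^sup>+u. (\<integral>\<^sup>+s. indicator A (Hfun \<alpha> p T ns s v e u) * indicator {0<..} s \<partial>lborel)
            \<partial>uniform_measure lborel {0<..<1}) = (\<integral>\<^sup>+s. f s * indicator {a e<..} s \<partial>lborel)"
    if e: "e > 0" for e
  proof -
    have "(\<integral>\<^sup>+u. (\<integral>\<^sup>+s. indicator A (Hfun \<alpha> p T ns s v e u) * indicator {0<..} s \<partial>lborel)
            \<partial>uniform_measure lborel {0<..<1})
       = (\<integral>\<^sup>+u. (\<integral>\<^sup>+s. indicator A (Hfun \<alpha> p T ns s v e u) * indicator {0<..} s \<partial>lborel) * indicator {0<..<1} u \<partial>lborel)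
          / emeasure lborel {0<..<(1::real)}"
      by (rule nn_integral_uniform_measure) (unfold Hfun_def, measurable)
    also have "\<dots> = (\<integral>\<^sup>+u. indicator {0<..<1} u * (\<integral>\<^sup>+s. f (max s (a e / u)) * indicator {0<..} s \<partial>lborel) \<partial>lborel)"
    proof -
      have "(\<integral>\<^sup>+s. indicator A (Hfun \<alpha> p T ns s v e u) * indicator {0<..} s \<partial>lborel) * indicator {0<..<1} u
          = indicator {0<..<1} u * (\<integral>\<^sup>+s. f (max s (a e / u)) * indicator {0<..} s \<partial>lborel)" for u
      proof (cases "u \<in> {0<..<1}")
        case True
        have "(\<integral>\<^sup>+s. indicator A (Hfun \<alpha> p T ns s v e u) * indicator {0<..} s \<partial>lborel)
            = (\<integral>\<^sup>+s. f (max s (a e / u)) * indicator {0<..} s \<partial>lborel)"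
          using True e by (intro nn_integral_cong) (auto simp: H_eq f_def split: split_indicator)
        then show ?thesis by (simp add: mult.commute)
      qed simp
      then show ?thesis by (simp add: divide_ennreal_def)
    qed
    also have "\<dots> = (\<integral>\<^sup>+s. f s * indicator {a e<..} s \<partial>lborel)"
      by (rule uavg) (use a_pos e in auto)
    finally show ?thesis .
  qed
  have "(\<integral>\<^sup>+e. (\<integral>\<^sup>+u. (\<integral>\<^sup>+s. indicator A (Hfun \<alpha> p T ns s v e u) * indicator {0<..} s \<partial>lborel)
            \<partial>uniform_measure lborel {0<..<1}) \<partial>ME)
      = (\<integral>\<^sup>+e. (\<integral>\<^sup>+s. f s * indicator {0<..} s * indicator {S * (R s) powr p<..} e \<partial>lborel) \<partial>ME)"
  proof (rule nn_integral_cong_AE)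
    show "AE e in ME. (\<integral>\<^sup>+u. (\<integral>\<^sup>+s. indicator A (Hfun \<alpha> p T ns s v e u) * indicator {0<..} s \<partial>lborel)
            \<partial>uniform_measure lborel {0<..<1}) = (\<integral>\<^sup>+s. f s * indicator {0<..} s * indicator {S * (R s) powr p<..} e \<partial>lborel)"
      using ME_pos
    proof eventually_elim
      case (elim e)
      have "(\<integral>\<^sup>+s. f s * indicator {a e<..} s \<partial>lborel) = (\<integral>\<^sup>+s. f s * indicator {0<..} s * indicator {S * (R s) powr p<..} e \<partial>lborel)"
      proof (intro nn_integral_cong)
        fix s :: real
        show "f s * indicator {a e<..} s = f s * indicator {0<..} s * indicator {S * (R s) powr p<..} e"
        proof (cases "s > 0")
          case True
          have "(a e < s) = (S * (R s) powr p < e)"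
            unfolding a_def R_def using Rcmp[of c \<alpha> p e s S] c al p elim True S by simp
          then show ?thesis using True by (auto split: split_indicator)
        next
          case False
          then have "\<not> a e < s" using a_pos[OF elim] by auto
          then show ?thesis using False by (auto split: split_indicator)
        qed
      qed
      then show ?case using step1[OF elim] by simp
    qed
  qed
  also have "\<dots> = (\<integral>\<^sup>+s. (\<integral>\<^sup>+e. f s * indicator {0<..} s * indicator {S * (R s) powr p<..} e \<partial>ME) \<partial>lborel)"
  proof -
    interpret ME: sigma_finite_measure ME by (rule ME_sf)
    interpret pair_sigma_finite lborel ME ..
    show ?thesis by (rule Fubini'[of "\<lambda>s e. f s * indicator {0<..} s * indicator {S * (R s) powr p<..} e"]) (unfold R_def, measurable)
  qed
  also have "\<dots> = (\<integral>\<^sup>+s. f s * ennreal (exp (- S * (R s) powr p)) * indicator {0<..} s \<partial>lborel)"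
  proof (intro nn_integral_cong)
    fix s :: real
    have "{S * (R s) powr p<..} \<in> sets ME" using ME_sets by simp
    then have "(\<integral>\<^sup>+e. f s * indicator {0<..} s * indicator {S * (R s) powr p<..} e \<partial>ME)
        = f s * indicator {0<..} s * emeasure ME {S * (R s) powr p<..}"
      by (rule nn_integral_cmult_indicator)
    also have "emeasure ME {S * (R s) powr p<..} = ennreal (exp (- (S * (R s) powr p)))"
      using S by (intro ME_tail) simp
    finally show "(\<integral>\<^sup>+e. f s * indicator {0<..} s * indicator {S * (R s) powr p<..} e \<partial>ME)
        = f s * ennreal (exp (- S * (R s) powr p)) * indicator {0<..} s"
      by (simp add: mult_ac)
  qed
  also have "\<dots> = (\<integral>\<^sup>+r. (indicator A (r *\<^sub>R w) * ennreal (exp (- S * r powr p))) * ennreal (c * r powr (- \<alpha> - 1)) * indicator {0<..} r \<partial>lborel)"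
    unfolding f_def R_def by (rule powsub[OF _ c al]) measurable
  finally show ?thesis by (simp add: c_def S_def w_def)
qed



lemma Int_stable_preimages: "Int_stable {X -` B \<inter> \<Omega> | B. B \<in> sets N}"
  unfolding Int_stable_def
proof safe
  fix B B' assume "B \<in> sets N" "B' \<in> sets N"
  then show "\<exists>C. X -` B \<inter> \<Omega> \<inter> (X -` B' \<inter> \<Omega>) = X -` C \<inter> \<Omega> \<and> C \<in> sets N"
    by (intro exI[of _ "B \<inter> B'"]) auto
qed

lemma measurable_sigma_gen:
  assumes G: "G \<subseteq> Pow \<Omega>" and f: "f \<in> \<Omega> \<rightarrow> space N"
    and pre: "\<And>B. B \<in> sets N \<Longrightarrow> f -` B \<inter> \<Omega> \<in> G"
  shows "f \<in> measurable (sigma \<Omega> G) N"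
proof (rule measurableI)
  show "\<And>x. x \<in> space (sigma \<Omega> G) \<Longrightarrow> f x \<in> space N" using f G by (auto simp: space_measure_of)
  fix B assume "B \<in> sets N"
  then have "f -` B \<inter> \<Omega> \<in> sigma_sets \<Omega> G" using pre by (auto intro: sigma_sets.Basic)
  then show "f -` B \<inter> space (sigma \<Omega> G) \<in> sets (sigma \<Omega> G)" using G by (simp add: space_measure_of)
qed

definition (in prob_space) indep2 :: "'b measure \<Rightarrow> ('a \<Rightarrow> 'b) \<Rightarrow> 'c measure \<Rightarrow> ('a \<Rightarrow> 'c) \<Rightarrow> bool" where
  "indep2 S X T Y \<longleftrightarrow> X \<in> measurable M S \<and> Y \<in> measurable M T \<and>
     indep_set (sigma_sets (space M) {X -` A \<inter> space M |A. A \<in> sets S})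
               (sigma_sets (space M) {Y -` A \<inter> space M |A. A \<in> sets T})"

lemma (in prob_space) indep_var_group:
  assumes ind: "indep_sets F K"
    and Fst: "\<And>i. i \<in> K \<Longrightarrow> Int_stable (F i)"
    and kk: "kk \<in> K" and J: "J \<subseteq> K" "kk \<notin> J"
    and FX: "F kk = {X -` B \<inter> space M | B. B \<in> sets S}"
    and X: "X \<in> measurable M S"
    and Y: "Y \<in> measurable (sigma (space M) (\<Union>i\<in>J. F i)) T"
    and Yrv: "Y \<in> measurable M T"
    and Fev: "\<And>i. i \<in> K \<Longrightarrow> F i \<subseteq> events"
  shows "indep2 S X T Y"
proof -
  define I where "I b = (if b then {kk} else J)" for b :: bool
  have U: "(\<Union>j. I j) = insert kk J" by (auto simp: I_def)
  have ind2: "indep_sets F (\<Union>j. I j)"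
    unfolding U by (rule indep_sets_mono_index[OF _ ind]) (use kk J in auto)
  have "indep_sets (\<lambda>j. sigma_sets (space M) (\<Union>i\<in>I j. F i)) UNIV"
    by (rule indep_sets_collect_sigma[OF ind2]) (use Fst kk J in \<open>auto simp: I_def disjoint_family_on_def split: if_splits\<close>)
  then have "indep_sets (case_bool (sigma_sets (space M) {X -` A \<inter> space M |A. A \<in> sets S})
                              (sigma_sets (space M) {Y -` A \<inter> space M |A. A \<in> sets T})) UNIV"
  proof (rule indep_sets_mono_sets)
    fix j :: bool
    show "case_bool (sigma_sets (space M) {X -` A \<inter> space M |A. A \<in> sets S})
            (sigma_sets (space M) {Y -` A \<inter> space M |A. A \<in> sets T}) j
          \<subseteq> sigma_sets (space M) (\<Union>i\<in>I j. F i)"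
    proof (cases j)
      case True
      then show ?thesis by (simp add: I_def FX)
    next
      case False
      have Gsub: "(\<Union>i\<in>J. F i) \<subseteq> Pow (space M)" using Fev J sets.sets_into_space by blast
      have "{Y -` A \<inter> space M |A. A \<in> sets T} \<subseteq> sigma_sets (space M) (\<Union>i\<in>J. F i)"
      proof safe
        fix A assume "A \<in> sets T"
        then have "Y -` A \<inter> space (sigma (space M) (\<Union>i\<in>J. F i)) \<in> sets (sigma (space M) (\<Union>i\<in>J. F i))"
          using Y by (rule measurable_sets[rotated])
        then show "Y -` A \<inter> space M \<in> sigma_sets (space M) (\<Union>i\<in>J. F i)"
          using Gsub by (simp add: space_measure_of sets_measure_of)
      qed
      then have "sigma_sets (space M) {Y -` A \<inter> space M |A. A \<in> sets T} \<subseteq> sigma_sets (space M) (\<Union>i\<in>J. F i)"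
        by (rule sigma_algebra.sigma_sets_subset[OF sigma_algebra_sigma_sets[OF Gsub]])
      then show ?thesis using False by (simp add: I_def)
    qed
  qed
  then have "indep_set (sigma_sets (space M) {X -` A \<inter> space M |A. A \<in> sets S})
                       (sigma_sets (space M) {Y -` A \<inter> space M |A. A \<in> sets T})"
    unfolding indep_set_def .
  then show ?thesis unfolding indep2_def using X Yrv by simp
qed

lemma (in prob_space) indep2_distr:
  assumes ind: "indep2 S X T Y"
  shows "distr M S X \<Otimes>\<^sub>M distr M T Y = distr M (S \<Otimes>\<^sub>M T) (\<lambda>x. (X x, Y x))"
proof -
  have rvs: "X \<in> measurable M S" "Y \<in> measurable M T" using ind by (auto simp: indep2_def)
  have isd: "indep_set (sigma_sets (space M) {X -` A \<inter> space M |A. A \<in> sets S})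
               (sigma_sets (space M) {Y -` A \<inter> space M |A. A \<in> sets T})" using ind by (simp add: indep2_def)
  have XY: "(\<lambda>x. (X x, Y x)) \<in> measurable M (S \<Otimes>\<^sub>M T)" using rvs by (rule measurable_Pair)
  let ?S = "distr M S X" and ?T = "distr M T Y" and ?J = "distr M (S \<Otimes>\<^sub>M T) (\<lambda>x. (X x, Y x))"
  interpret X: prob_space ?S by (rule prob_space_distr) (rule rvs)
  interpret Y: prob_space ?T by (rule prob_space_distr) (rule rvs)
  interpret XY: pair_prob_space ?S ?T ..
  show "?S \<Otimes>\<^sub>M ?T = ?J"
  proof (rule pair_measure_eqI)
    show "sigma_finite_measure ?S" ..
    show "sigma_finite_measure ?T" ..
    fix A B assume A: "A \<in> sets ?S" and B: "B \<in> sets ?T"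
    have "emeasure ?J (A \<times> B) = emeasure M ((\<lambda>x. (X x, Y x)) -` (A \<times> B) \<inter> space M)"
      using A B by (intro emeasure_distr[OF XY]) auto
    also have "(\<lambda>x. (X x, Y x)) -` (A \<times> B) \<inter> space M = (X -` A \<inter> space M) \<inter> (Y -` B \<inter> space M)" by auto
    also have "emeasure M ((X -` A \<inter> space M) \<inter> (Y -` B \<inter> space M)) = emeasure M (X -` A \<inter> space M) * emeasure M (Y -` B \<inter> space M)"
    proof -
      have "prob ((X -` A \<inter> space M) \<inter> (Y -` B \<inter> space M)) = prob (X -` A \<inter> space M) * prob (Y -` B \<inter> space M)"
        by (rule indep_setD[OF isd]) (use A B in \<open>auto intro!: sigma_sets.Basic\<close>)
      then show ?thesis by (simp add: emeasure_eq_measure measure_nonneg ennreal_mult)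
    qed
    also have "\<dots> = emeasure ?S A * emeasure ?T B"
      using rvs A B by (simp add: emeasure_distr)
    finally show "emeasure ?S A * emeasure ?T B = emeasure ?J (A \<times> B)" by simp
  qed simp
qed

lemma (in prob_space) indep_var_nn_integral:
  assumes ind: "indep2 S X T Y" and f[measurable]: "f \<in> borel_measurable (S \<Otimes>\<^sub>M T)"
  shows "(\<integral>\<^sup>+\<omega>. f (X \<omega>, Y \<omega>) \<partial>M) = (\<integral>\<^sup>+x. (\<integral>\<^sup>+y. f (x, y) \<partial>distr M T Y) \<partial>distr M S X)"
proof -
  have X[measurable]: "X \<in> measurable M S" and Y[measurable]: "Y \<in> measurable M T"
    using ind by (auto simp: indep2_def)
  have eq: "distr M S X \<Otimes>\<^sub>M distr M T Y = distr M (S \<Otimes>\<^sub>M T) (\<lambda>x. (X x, Y x))"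
    using ind by (rule indep2_distr)
  interpret SX: prob_space "distr M S X" by (rule prob_space_distr) simp
  interpret TY: prob_space "distr M T Y" by (rule prob_space_distr) simp
  interpret pair_sigma_finite "distr M S X" "distr M T Y" ..
  have "(\<integral>\<^sup>+\<omega>. f (X \<omega>, Y \<omega>) \<partial>M) = (\<integral>\<^sup>+z. f z \<partial>distr M (S \<Otimes>\<^sub>M T) (\<lambda>x. (X x, Y x)))"
    by (subst nn_integral_distr) auto
  also have "\<dots> = (\<integral>\<^sup>+z. f z \<partial>(distr M S X \<Otimes>\<^sub>M distr M T Y))" by (simp add: eq)
  also have "\<dots> = (\<integral>\<^sup>+x. (\<integral>\<^sup>+y. f (x, y) \<partial>distr M T Y) \<partial>distr M S X)"
    by (rule TY.nn_integral_fst[symmetric]) (simp add: eq)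
  finally show ?thesis .
qed

lemma Qnorm_integral:
  fixes \<sigma> :: "'a::euclidean_space measure" and Qk :: "'a \<Rightarrow> real measure"
  assumes sig[measurable_cong]: "sets \<sigma> = sets borel"
    and fin: "finite_measure \<sigma>" and nz: "emeasure \<sigma> (space \<sigma>) \<noteq> 0"
    and Qk[measurable]: "Qk \<in> \<sigma> \<rightarrow>\<^sub>M subprob_algebra borel"
    and F[measurable]: "F \<in> borel_measurable borel"
  shows "(\<integral>\<^sup>+v. F v \<partial>Qnormalized \<sigma> Qk)
       = ennreal (1 / measure \<sigma> (space \<sigma>)) * (\<integral>\<^sup>+u. (\<integral>\<^sup>+s. F (s *\<^sub>R u) \<partial>Qk u) \<partial>\<sigma>)"
proof -
  define ns where "ns = measure \<sigma> (space \<sigma>)"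
  interpret finite_measure \<sigma> by (rule fin)
  have ns: "ns > 0" using nz by (simp add: ns_def emeasure_eq_measure zero_less_measure_iff)
  have sp: "space \<sigma> = UNIV" using sets_eq_imp_space_eq[OF sig] by simp
  define K where "K u = distr (Qk u) borel (\<lambda>s. s *\<^sub>R u)" for u
  have K[measurable]: "K \<in> \<sigma> \<rightarrow>\<^sub>M subprob_algebra borel"
    unfolding K_def by (rule measurable_distr2[where f="\<lambda>u s. s *\<^sub>R u"]) measurable
  define N where "N = density (\<sigma> \<bind> K) (\<lambda>_. ennreal (1 / ns))"
  have sets_bind: "sets (\<sigma> \<bind> K) = sets borel"
    by (rule sets_bind[OF sets_kernel[OF K]]) (use sp in auto)
  have space_bind: "space (\<sigma> \<bind> K) = UNIV"
    using sets_eq_imp_space_eq[OF sets_bind] by simp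
  have Qs: "\<And>u. sets (Qk u) = sets borel" using measurable_space[OF Qk] sp
    by (auto simp: space_subprob_algebra)
  have eqN: "Qnormalized \<sigma> Qk = N"
  proof -
    have "N = measure_of (space N) (sets N) (emeasure N)" by (simp add: measure_of_of_measure)
    also have "\<dots> = measure_of UNIV (sets borel) (emeasure N)"
      by (simp add: N_def space_bind sets_bind)
    also have "\<dots> = measure_of UNIV (sets borel) (\<lambda>A. Qfun \<sigma> Qk A / ennreal ns)"
    proof (rule measure_of_eq)
      show "sets borel \<subseteq> Pow UNIV" by simp
      fix a assume "a \<in> sigma_sets UNIV (sets (borel :: 'a measure))"
      then have a[measurable]: "a \<in> sets borel" using sets.sigma_sets_eq[of "borel :: 'a measure"] by simp
      have "emeasure N a = ennreal (1 / ns) * emeasure (\<sigma> \<bind> K) a"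
        unfolding N_def using a sets_bind
        by (simp add: emeasure_density nn_integral_cmult_indicator)
      also have "emeasure (\<sigma> \<bind> K) a = (\<integral>\<^sup>+u. emeasure (K u) a \<partial>\<sigma>)"
        by (rule emeasure_bind[where N=borel]) (use sp K a in auto)
      also have "\<dots> = Qfun \<sigma> Qk a"
        unfolding Qfun_def
      proof (rule nn_integral_cong)
        fix u
        have "emeasure (K u) a = (\<integral>\<^sup>+x. indicator a x \<partial>K u)"
          by (rule nn_integral_indicator[symmetric]) (simp add: K_def)
        also have "\<dots> = (\<integral>\<^sup>+s. indicator a (s *\<^sub>R u) \<partial>Qk u)"
          unfolding K_def by (subst nn_integral_distr) (auto simp: measurable_cong_sets[OF Qs refl])
        finally show "emeasure (K u) a = (\<integral>\<^sup>+s. indicator a (s *\<^sub>R u) \<partial>Qk u)" .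
      qed
      finally show "emeasure N a = Qfun \<sigma> Qk a / ennreal ns"
        using ns by (simp add: divide_ennreal_def inverse_ennreal mult.commute inverse_eq_divide)
    qed
    finally show ?thesis unfolding Qnormalized_def ns_def by simp
  qed
  have "(\<integral>\<^sup>+v. F v \<partial>Qnormalized \<sigma> Qk) = (\<integral>\<^sup>+v. ennreal (1 / ns) * F v \<partial>(\<sigma> \<bind> K))"
    unfolding eqN N_def by (subst nn_integral_density) (auto simp: measurable_cong_sets[OF sets_bind refl])
  also have "\<dots> = ennreal (1 / ns) * (\<integral>\<^sup>+v. F v \<partial>(\<sigma> \<bind> K))"
    by (rule nn_integral_cmult) (simp add: measurable_cong_sets[OF sets_bind refl])
  also have "(\<integral>\<^sup>+v. F v \<partial>(\<sigma> \<bind> K)) = (\<integral>\<^sup>+u. (\<integral>\<^sup>+v. F v \<partial>K u) \<partial>\<sigma>)"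
    by (rule nn_integral_bind[OF F K])
  also have "\<dots> = (\<integral>\<^sup>+u. (\<integral>\<^sup>+s. F (s *\<^sub>R u) \<partial>Qk u) \<partial>\<sigma>)"
    unfolding K_def by (intro nn_integral_cong, subst nn_integral_distr) (auto simp: measurable_cong_sets[OF Qs refl])
  finally show ?thesis by (simp add: ns_def)
qed

theorem mainTheorem5:
  fixes \<sigma> :: "'a::euclidean_space measure"
    and Qk :: "'a \<Rightarrow> real measure"
    and p \<alpha> T t :: real
    and P :: "'w measure"
    and T1 E1 U1 :: "'w \<Rightarrow> real"
    and V1 :: "'w \<Rightarrow> 'a"
    and A :: "'a set"
  assumes sigma_sets: "sets \<sigma> = sets borel"
    and sigma_finite: "finite_measure \<sigma>"
    and sigma_sphere: "emeasure \<sigma> (UNIV - sphere 0 1) = 0"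
    and sigma_nonzero: "emeasure \<sigma> (space \<sigma>) \<noteq> 0"
    and Qk_meas: "Qk \<in> \<sigma> \<rightarrow>\<^sub>M subprob_algebra borel"
    and Qk_prob: "\<And>u. u \<in> sphere 0 1 \<Longrightarrow> prob_space (Qk u)"
    and Qk_pos: "\<And>u. u \<in> sphere 0 1 \<Longrightarrow> emeasure (Qk u) {..0} = 0"
    and p_pos: "p > 0"
    and alpha: "0 < \<alpha>" "\<alpha> < 2"
    and T_pos: "T > 0"
    and P: "prob_space P"
    and T1_law: "distr P borel T1 = uniform_measure lborel {0<..<T}"
    and E1_law: "distributed P lborel E1 (exponential_density 1)"
    and U1_law: "distr P borel U1 = uniform_measure lborel {0<..<1}"
    and V1_law: "distr P borel V1 = Qnormalized \<sigma> Qk"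
    and T1_meas: "T1 \<in> P \<rightarrow>\<^sub>M borel"
    and U1_meas: "U1 \<in> P \<rightarrow>\<^sub>M borel"
    and V1_meas: "V1 \<in> P \<rightarrow>\<^sub>M borel"
    and indep: "prob_space.indep_sets P
        (\<lambda>i::nat. if i = 0 then {T1 -` B \<inter> space P | B. B \<in> sets (borel :: real measure)}
                  else if i = 1 then {E1 -` B \<inter> space P | B. B \<in> sets (borel :: real measure)}
                  else if i = 2 then {U1 -` B \<inter> space P | B. B \<in> sets (borel :: real measure)}
                  else {V1 -` B \<inter> space P | B. B \<in> sets (borel :: 'a measure)})
        {0, 1, 2, 3}"
    and t: "0 \<le> t" "t \<le> T"
    and A_borel: "A \<in> sets borel"
    and A_away: "0 \<notin> closure A"
  shows "(\<integral>\<^sup>+ s\<in>{0<..}.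
            ennreal (measure P {\<omega> \<in> space P.
               indicator {0<..t} (T1 \<omega>) *\<^sub>R
                 Hfun \<alpha> p T (measure \<sigma> (space \<sigma>)) s (V1 \<omega>) (E1 \<omega>) (U1 \<omega>) \<in> A}) \<partial>lborel)
         = ennreal t * levyM \<sigma> Qk p \<alpha> A"
proof -
  interpret P: prob_space P by (rule P)
  interpret sf: finite_measure \<sigma> by (rule sigma_finite)
  define ns where "ns = measure \<sigma> (space \<sigma>)"
  have ns: "ns > 0" using sigma_nonzero by (simp add: ns_def sf.emeasure_eq_measure zero_less_measure_iff)
  have sp: "space \<sigma> = UNIV" using sets_eq_imp_space_eq[OF sigma_sets] by simp
  have E1_meas[measurable]: "E1 \<in> P \<rightarrow>\<^sub>M borel" using distributed_measurable[OF E1_law] by simp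
  note [measurable] = T1_meas U1_meas V1_meas A_borel
  have A0: "0 \<notin> A" using A_away closure_subset by blast
  define GG where "GG v e u = (\<integral>\<^sup>+s. indicator A (Hfun \<alpha> p T ns s v e u) * indicator {0<..} s \<partial>lborel)" for v e u
  have GG_meas[measurable]: "(\<lambda>x. GG (fst x) (fst (snd x)) (snd (snd x))) \<in> borel_measurable (borel \<Otimes>\<^sub>M (borel \<Otimes>\<^sub>M borel))"
    unfolding GG_def Hfun_def by measurable
  define h1 where "h1 \<tau> = (indicator {0<..t} \<tau> :: ennreal)" for \<tau> :: real
  have step1: "(\<integral>\<^sup>+ s\<in>{0<..}.
            ennreal (measure P {\<omega> \<in> space P.
               indicator {0<..t} (T1 \<omega>) *\<^sub>R
                 Hfun \<alpha> p T (measure \<sigma> (space \<sigma>)) s (V1 \<omega>) (E1 \<omega>) (U1 \<omega>) \<in> A}) \<partial>lborel)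
      = (\<integral>\<^sup>+\<omega>. h1 (T1 \<omega>) * GG (V1 \<omega>) (E1 \<omega>) (U1 \<omega>) \<partial>P)"
  proof -
    define Z where "Z s \<omega> = indicator {0<..t} (T1 \<omega>) *\<^sub>R Hfun \<alpha> p T ns s (V1 \<omega>) (E1 \<omega>) (U1 \<omega>)" for s \<omega>
    have Z_meas[measurable]: "(\<lambda>x. Z (snd x) (fst x)) \<in> borel_measurable (P \<Otimes>\<^sub>M lborel)"
      unfolding Z_def Hfun_def by measurable
    have Z_meas2[measurable]: "(\<lambda>\<omega>. Z s \<omega>) \<in> borel_measurable P" for s
      unfolding Z_def Hfun_def by measurable
    have ev: "ennreal (measure P {\<omega> \<in> space P. Z s \<omega> \<in> A}) = (\<integral>\<^sup>+\<omega>. indicator A (Z s \<omega>) \<partial>P)" for s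
    proof -
      have set: "{\<omega> \<in> space P. Z s \<omega> \<in> A} \<in> sets P" by measurable
      have "ennreal (measure P {\<omega> \<in> space P. Z s \<omega> \<in> A}) = emeasure P {\<omega> \<in> space P. Z s \<omega> \<in> A}"
        by (simp add: P.emeasure_eq_measure)
      also have "\<dots> = (\<integral>\<^sup>+\<omega>. indicator {\<omega> \<in> space P. Z s \<omega> \<in> A} \<omega> \<partial>P)"
        by (rule nn_integral_indicator[symmetric, OF set])
      also have "\<dots> = (\<integral>\<^sup>+\<omega>. indicator A (Z s \<omega>) \<partial>P)"
        by (intro nn_integral_cong) (auto split: split_indicator)
      finally show ?thesis .
    qed
    have "(\<integral>\<^sup>+ s\<in>{0<..}. ennreal (measure P {\<omega> \<in> space P. Z s \<omega> \<in> A}) \<partial>lborel)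
        = (\<integral>\<^sup>+ s. (\<integral>\<^sup>+\<omega>. indicator A (Z s \<omega>) * indicator {0<..} s \<partial>P) \<partial>lborel)"
      by (intro nn_integral_cong) (simp add: ev nn_integral_multc)
    also have "\<dots> = (\<integral>\<^sup>+\<omega>. (\<integral>\<^sup>+ s. indicator A (Z s \<omega>) * indicator {0<..} s \<partial>lborel) \<partial>P)"
    proof -
      interpret pair_sigma_finite P lborel ..
      show ?thesis
        by (rule Fubini'[of "\<lambda>\<omega> s. indicator A (Z s \<omega>) * indicator {0<..} s"]) measurable
    qed
    also have "\<dots> = (\<integral>\<^sup>+\<omega>. h1 (T1 \<omega>) * GG (V1 \<omega>) (E1 \<omega>) (U1 \<omega>) \<partial>P)"
    proof (intro nn_integral_cong)
      fix \<omega>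
      show "(\<integral>\<^sup>+ s. indicator A (Z s \<omega>) * indicator {0<..} s \<partial>lborel) = h1 (T1 \<omega>) * GG (V1 \<omega>) (E1 \<omega>) (U1 \<omega>)"
      proof (cases "T1 \<omega> \<in> {0<..t}")
        case True
        then show ?thesis by (simp add: Z_def h1_def GG_def)
      next
        case False
        then show ?thesis by (simp add: Z_def h1_def GG_def A0)
      qed
    qed
    finally show ?thesis unfolding Z_def ns_def .
  qed
  define F where "F = (\<lambda>i::nat. if i = 0 then {T1 -` B \<inter> space P | B. B \<in> sets (borel :: real measure)}
                  else if i = 1 then {E1 -` B \<inter> space P | B. B \<in> sets (borel :: real measure)}
                  else if i = 2 then {U1 -` B \<inter> space P | B. B \<in> sets (borel :: real measure)}
                  else {V1 -` B \<inter> space P | B. B \<in> sets (borel :: 'a measure)})"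
  have indF: "P.indep_sets F {0,1,2,3}" using indep by (simp add: F_def)
  have Fst: "\<And>i. i \<in> {0,1,2,3} \<Longrightarrow> Int_stable (F i)" by (auto simp: F_def Int_stable_preimages)
  have Fev: "\<And>i. i \<in> {0,1,2,3} \<Longrightarrow> F i \<subseteq> P.events" by (auto simp: F_def)
  have sig_meas: "f \<in> measurable (sigma (space P) G) N"
    if "G \<subseteq> Pow (space P)" "F i \<subseteq> G" "F i = {f -` B \<inter> space P | B. B \<in> sets N}" "f \<in> P \<rightarrow>\<^sub>M N"
    for f :: "'w \<Rightarrow> 'b" and G i N
    using that by (intro measurable_sigma_gen) (auto dest: measurable_space)
  have Gsub: "(\<Union>i\<in>J. F i) \<subseteq> Pow (space P)" if "J \<subseteq> {0,1,2,3}" for J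
    using Fev that sets.sets_into_space[of _ P] by blast
  have F0: "F 0 = {T1 -` B \<inter> space P | B. B \<in> sets borel}" by (simp add: F_def)
  have F1: "F 1 = {E1 -` B \<inter> space P | B. B \<in> sets borel}" by (simp add: F_def)
  have F2: "F 2 = {U1 -` B \<inter> space P | B. B \<in> sets borel}" by (simp add: F_def)
  have F3: "F 3 = {V1 -` B \<inter> space P | B. B \<in> sets borel}" by (simp add: F_def)
  have indT: "P.indep2 borel T1 (borel \<Otimes>\<^sub>M (borel \<Otimes>\<^sub>M borel)) (\<lambda>\<omega>. (V1 \<omega>, (E1 \<omega>, U1 \<omega>)))"
  proof (rule P.indep_var_group[OF indF Fst, where kk=0 and J="{1,2,3}"])
    have G: "(\<Union>i\<in>{1,2,3}. F i) \<subseteq> Pow (space P)" by (rule Gsub) auto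
    show "(\<lambda>\<omega>. (V1 \<omega>, (E1 \<omega>, U1 \<omega>))) \<in> measurable (sigma (space P) (\<Union>i\<in>{1,2,3}. F i)) (borel \<Otimes>\<^sub>M (borel \<Otimes>\<^sub>M borel))"
      by (intro measurable_Pair sig_meas[OF G _ F3] sig_meas[OF G _ F1] sig_meas[OF G _ F2]) auto
  qed (auto simp: F_def Fev)
  have indV: "P.indep2 borel V1 (borel \<Otimes>\<^sub>M borel) (\<lambda>\<omega>. (E1 \<omega>, U1 \<omega>))"
  proof (rule P.indep_var_group[OF indF Fst, where kk=3 and J="{1,2}"])
    have G: "(\<Union>i\<in>{1,2}. F i) \<subseteq> Pow (space P)" by (rule Gsub) auto
    show "(\<lambda>\<omega>. (E1 \<omega>, U1 \<omega>)) \<in> measurable (sigma (space P) (\<Union>i\<in>{1,2}. F i)) (borel \<Otimes>\<^sub>M borel)"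
      by (intro measurable_Pair sig_meas[OF G _ F1] sig_meas[OF G _ F2]) auto
  qed (auto simp: F_def Fev)
  have indE: "P.indep2 borel E1 borel U1"
  proof (rule P.indep_var_group[OF indF Fst, where kk=1 and J="{2}"])
    have G: "(\<Union>i\<in>{2}. F i) \<subseteq> Pow (space P)" by (rule Gsub) auto
    show "U1 \<in> measurable (sigma (space P) (\<Union>i\<in>{2}. F i)) borel"
      by (intro sig_meas[OF G _ F2]) auto
  qed (auto simp: F_def Fev)
  have step2: "(\<integral>\<^sup>+\<omega>. h1 (T1 \<omega>) * GG (V1 \<omega>) (E1 \<omega>) (U1 \<omega>) \<partial>P)
      = ennreal (t / T) * (\<integral>\<^sup>+\<omega>. GG (V1 \<omega>) (E1 \<omega>) (U1 \<omega>) \<partial>P)"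
  proof -
    define g where "g y = GG (fst y) (fst (snd y)) (snd (snd y))" for y :: "'a \<times> real \<times> real"
    have g_meas[measurable]: "g \<in> borel_measurable (borel \<Otimes>\<^sub>M (borel \<Otimes>\<^sub>M borel))"
      unfolding g_def by (rule GG_meas)
    have h1_meas[measurable]: "h1 \<in> borel_measurable borel" unfolding h1_def by measurable
    have Y_meas[measurable]: "(\<lambda>\<omega>. (V1 \<omega>, (E1 \<omega>, U1 \<omega>))) \<in> P \<rightarrow>\<^sub>M (borel \<Otimes>\<^sub>M (borel \<Otimes>\<^sub>M borel))"
      by measurable
    have "(\<integral>\<^sup>+\<omega>. h1 (T1 \<omega>) * GG (V1 \<omega>) (E1 \<omega>) (U1 \<omega>) \<partial>P)
        = (\<integral>\<^sup>+\<omega>. (\<lambda>z. h1 (fst z) * g (snd z)) (T1 \<omega>, (V1 \<omega>, (E1 \<omega>, U1 \<omega>))) \<partial>P)"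
      by (simp add: g_def)
    also have "\<dots> = (\<integral>\<^sup>+\<tau>. (\<integral>\<^sup>+y. h1 \<tau> * g y \<partial>distr P (borel \<Otimes>\<^sub>M (borel \<Otimes>\<^sub>M borel)) (\<lambda>\<omega>. (V1 \<omega>, (E1 \<omega>, U1 \<omega>))))
          \<partial>distr P borel T1)"
      by (subst P.indep_var_nn_integral[OF indT]) (simp_all, measurable)
    also have "\<dots> = (\<integral>\<^sup>+\<tau>. h1 \<tau> * (\<integral>\<^sup>+\<omega>. GG (V1 \<omega>) (E1 \<omega>) (U1 \<omega>) \<partial>P) \<partial>distr P borel T1)"
      by (intro nn_integral_cong) (simp add: nn_integral_cmult nn_integral_distr g_def)
    also have "\<dots> = (\<integral>\<^sup>+\<tau>. h1 \<tau> \<partial>distr P borel T1) * (\<integral>\<^sup>+\<omega>. GG (V1 \<omega>) (E1 \<omega>) (U1 \<omega>) \<partial>P)"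
      by (rule nn_integral_multc) simp
    also have "(\<integral>\<^sup>+\<tau>. h1 \<tau> \<partial>distr P borel T1) = ennreal (t / T)"
    proof -
      have "(\<integral>\<^sup>+\<tau>. h1 \<tau> \<partial>distr P borel T1) = emeasure (uniform_measure lborel {0<..<T}) {0<..t}"
        unfolding T1_law h1_def by (rule nn_integral_indicator) simp
      also have "\<dots> = emeasure lborel ({0<..<T} \<inter> {0<..t}) / emeasure lborel {0<..<T}" by simp
      also have "emeasure lborel ({0<..<T} \<inter> {0<..t}) = ennreal t"
      proof (cases "t < T")
        case True
        then have "{0<..<T} \<inter> {0<..t} = {0<..t}" by auto
        then show ?thesis using t by simp
      next
        case False
        then have "t = T" using t by simp
        then have "{0<..<T} \<inter> {0<..t} = {0<..<t}" by auto
        then show ?thesis using t by simp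
      qed
      finally show ?thesis using T_pos t by (simp add: divide_ennreal)
    qed
    finally show ?thesis .
  qed
  define ME where "ME = distr P borel E1"
  define G3 where "G3 v = (\<integral>\<^sup>+e. (\<integral>\<^sup>+u. GG v e u \<partial>uniform_measure lborel {0<..<1}) \<partial>ME)" for v
  interpret ME: prob_space ME unfolding ME_def by (rule P.prob_space_distr) simp
  interpret UU: prob_space "uniform_measure lborel {0<..<(1::real)}" by (rule prob_space_uniform_measure) auto
  have ME_sets[measurable_cong]: "sets ME = sets borel" by (simp add: ME_def)
  have G3_meas[measurable]: "G3 \<in> borel_measurable borel"
    unfolding G3_def GG_def Hfun_def by measurable
  have step3: "(\<integral>\<^sup>+\<omega>. GG (V1 \<omega>) (E1 \<omega>) (U1 \<omega>) \<partial>P) = (\<integral>\<^sup>+v. G3 v \<partial>Qnormalized \<sigma> Qk)"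
  proof -
    have GG2[measurable]: "(\<lambda>z. GG v (fst z) (snd z)) \<in> borel_measurable (borel \<Otimes>\<^sub>M borel)" for v
    proof -
      have "(\<lambda>z. (v, z)) \<in> (borel \<Otimes>\<^sub>M borel) \<rightarrow>\<^sub>M (borel \<Otimes>\<^sub>M (borel \<Otimes>\<^sub>M borel))" by measurable
      from measurable_compose[OF this GG_meas] show ?thesis by simp
    qed
    have "(\<integral>\<^sup>+\<omega>. GG (V1 \<omega>) (E1 \<omega>) (U1 \<omega>) \<partial>P)
        = (\<integral>\<^sup>+\<omega>. (\<lambda>x. GG (fst x) (fst (snd x)) (snd (snd x))) (V1 \<omega>, (E1 \<omega>, U1 \<omega>)) \<partial>P)" by simp
    also have "\<dots> = (\<integral>\<^sup>+v. (\<integral>\<^sup>+y. GG v (fst y) (snd y) \<partial>distr P (borel \<Otimes>\<^sub>M borel) (\<lambda>\<omega>. (E1 \<omega>, U1 \<omega>))) \<partial>distr P borel V1)"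
      by (subst P.indep_var_nn_integral[OF indV]) (simp_all add: GG_meas)
    also have "\<dots> = (\<integral>\<^sup>+v. G3 v \<partial>distr P borel V1)"
    proof (intro nn_integral_cong)
      fix v :: 'a
      have "(\<integral>\<^sup>+y. GG v (fst y) (snd y) \<partial>distr P (borel \<Otimes>\<^sub>M borel) (\<lambda>\<omega>. (E1 \<omega>, U1 \<omega>)))
          = (\<integral>\<^sup>+\<omega>. (\<lambda>z. GG v (fst z) (snd z)) (E1 \<omega>, U1 \<omega>) \<partial>P)"
        by (subst nn_integral_distr) simp_all
      also have "\<dots> = (\<integral>\<^sup>+e. (\<integral>\<^sup>+u. GG v e u \<partial>distr P borel U1) \<partial>distr P borel E1)"
        by (subst P.indep_var_nn_integral[OF indE]) simp_all
      also have "\<dots> = G3 v" by (simp add: G3_def ME_def U1_law)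
      finally show "(\<integral>\<^sup>+y. GG v (fst y) (snd y) \<partial>distr P (borel \<Otimes>\<^sub>M borel) (\<lambda>\<omega>. (E1 \<omega>, U1 \<omega>))) = G3 v" .
    qed
    finally show ?thesis by (simp add: V1_law)
  qed
  have step4: "(\<integral>\<^sup>+v. G3 v \<partial>Qnormalized \<sigma> Qk) = ennreal (1 / ns) * (ennreal (ns * T) * levyM \<sigma> Qk p \<alpha> A)"
  proof -
    have ME_pos: "AE e in ME. e > 0"
    proof -
      have "\<P>(x in P. E1 x \<le> 0) = 0"
        using P.exponential_distributedD_le[OF E1_law, of 0] by simp
      then have "AE \<omega> in P. 0 < E1 \<omega>"
        by (intro AE_I'[of "{\<omega> \<in> space P. E1 \<omega> \<le> 0}"])
           (auto simp: P.emeasure_eq_measure null_sets_def not_less)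
      then show ?thesis unfolding ME_def by (subst AE_distr_iff) simp_all
    qed
    have ME_tail: "emeasure ME {x<..} = ennreal (exp (- x))" if "x \<ge> 0" for x
    proof -
      have "emeasure ME {x<..} = emeasure P (E1 -` {x<..} \<inter> space P)"
        unfolding ME_def by (rule emeasure_distr) simp_all
      also have "E1 -` {x<..} \<inter> space P = {\<omega> \<in> space P. x < E1 \<omega>}" by auto
      also have "emeasure P \<dots> = ennreal (\<P>(\<omega> in P. x < E1 \<omega>))" by (simp add: P.emeasure_eq_measure)
      also have "\<P>(\<omega> in P. x < E1 \<omega>) = exp (- x)"
        using P.exponential_distributedD_gt[OF E1_law that] by simp
      finally show ?thesis .
    qed
    have ME_sf: "sigma_finite_measure ME" ..
    have Qs: "\<And>u. sets (Qk u) = sets borel" using measurable_space[OF Qk_meas] sp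
      by (auto simp: space_subprob_algebra)
    note Qk_meas[measurable]
    define Jp where "Jp x = (\<integral>\<^sup>+s. ennreal (exp (- s * snd x powr p)) \<partial>Qk (fst x))" for x :: "'a \<times> real"
    have Jp_meas[measurable]: "Jp \<in> borel_measurable (\<sigma> \<Otimes>\<^sub>M lborel)"
      unfolding Jp_def
      by (rule nn_integral_measurable_subprob_algebra2[where N=borel]) measurable
    define L' where "L' u = (\<integral>\<^sup>+r. indicator A (r *\<^sub>R u) * ennreal (r powr (- \<alpha> - 1)) * indicator {0<..} r * Jp (u, r) \<partial>lborel)" for u
    note sigma_sets[measurable_cong]
    have L'_meas[measurable]: "L' \<in> borel_measurable \<sigma>"
    proof -
      have "(\<lambda>x. indicator A (snd x *\<^sub>R fst x) * ennreal (snd x powr (- \<alpha> - 1)) * indicator {0<..} (snd x) * Jp x)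
          \<in> borel_measurable (\<sigma> \<Otimes>\<^sub>M lborel)" by measurable
      then have "(\<lambda>(u, r). indicator A (r *\<^sub>R u) * ennreal (r powr (- \<alpha> - 1)) * indicator {0<..} r * Jp (u, r))
          \<in> borel_measurable (\<sigma> \<Otimes>\<^sub>M lborel)" by (simp add: split_beta')
      then show ?thesis unfolding L'_def by (rule lborel.borel_measurable_nn_integral)
    qed
    define L where "L u = (\<integral>\<^sup>+ r\<in>{0<..}. indicator A (r *\<^sub>R u) * ennreal (qlap Qk (r powr p) u * r powr (- \<alpha> - 1)) \<partial>lborel)" for u
    have sphAE: "AE u in \<sigma>. u \<in> sphere 0 1"
      by (rule AE_I'[of "UNIV - sphere 0 1"]) (auto simp: null_sets_def sigma_sets sigma_sphere)
    have key: "(\<integral>\<^sup>+s. G3 (s *\<^sub>R u) \<partial>Qk u) = ennreal (ns * T) * L' u \<and> L' u = L u"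
      if u: "u \<in> sphere 0 1" for u
    proof -
      interpret Q: prob_space "Qk u" using Qk_prob u .
      have Qsu[measurable_cong]: "sets (Qk u) = sets borel" by (rule Qs)
      have nu: "norm u = 1" using u by simp
      have pc: "sets (Qk u \<Otimes>\<^sub>M lborel) = sets (borel \<Otimes>\<^sub>M lborel)"
        by (rule sets_pair_measure_cong) (simp_all add: Qsu)
      have Qpos: "AE s in Qk u. s > 0"
        by (rule AE_I'[of "{..0}"]) (auto simp: null_sets_def Qk_pos[OF u] Qsu)
      define Phi where "Phi s = (\<integral>\<^sup>+r. indicator A (r *\<^sub>R u) * ennreal (exp (- s * r powr p))
            * ennreal (ns * T * r powr (- \<alpha> - 1)) * indicator {0<..} r \<partial>lborel)" for s
      have a: "(\<integral>\<^sup>+s. G3 (s *\<^sub>R u) \<partial>Qk u) = (\<integral>\<^sup>+s. Phi s \<partial>Qk u)"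
      proof (rule nn_integral_cong_AE)
        show "AE s in Qk u. G3 (s *\<^sub>R u) = Phi s"
          using Qpos
        proof eventually_elim
          case (elim s)
          have v: "s *\<^sub>R u \<noteq> 0" using elim nu by auto
          have n: "norm (s *\<^sub>R u) = s" using elim nu by simp
          have w: "(s *\<^sub>R u) /\<^sub>R norm (s *\<^sub>R u) = u" using elim n by simp
          note P1 = perv[OF A_borel v ns T_pos alpha(1) p_pos ME_sets ME_sf ME_pos ME_tail]
          note P2 = P1[unfolded w, unfolded n]
          show ?case
            unfolding G3_def GG_def Phi_def by (rule P2)
        qed
      qed
      have X_meas[measurable]: "(\<lambda>r. indicator A (r *\<^sub>R u) * ennreal (r powr (- \<alpha> - 1)) * indicator {0<..} r * Jp (u, r))
          \<in> borel_measurable lborel"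
      proof -
        have "(\<lambda>r. (u, r)) \<in> lborel \<rightarrow>\<^sub>M (\<sigma> \<Otimes>\<^sub>M lborel)" by (rule measurable_Pair) (simp_all add: sp)
        from measurable_compose[OF this Jp_meas] show ?thesis by measurable
      qed
      have b: "(\<integral>\<^sup>+s. Phi s \<partial>Qk u) = (\<integral>\<^sup>+r. (\<integral>\<^sup>+s. indicator A (r *\<^sub>R u) * ennreal (exp (- s * r powr p))
            * ennreal (ns * T * r powr (- \<alpha> - 1)) * indicator {0<..} r \<partial>Qk u) \<partial>lborel)"
      proof -
        interpret pair_sigma_finite "Qk u" lborel ..
        show ?thesis unfolding Phi_def
          by (rule Fubini'[symmetric, of "\<lambda>s r. indicator A (r *\<^sub>R u) * ennreal (exp (- s * r powr p))
            * ennreal (ns * T * r powr (- \<alpha> - 1)) * indicator {0<..} r"])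
             (unfold measurable_cong_sets[OF pc refl], measurable)
      qed
      have c: "(\<integral>\<^sup>+s. indicator A (r *\<^sub>R u) * ennreal (exp (- s * r powr p))
            * ennreal (ns * T * r powr (- \<alpha> - 1)) * indicator {0<..} r \<partial>Qk u)
          = ennreal (ns * T) * (indicator A (r *\<^sub>R u) * ennreal (r powr (- \<alpha> - 1)) * indicator {0<..} r * Jp (u, r))" for r
      proof -
        have e: "ennreal (ns * T * r powr (- \<alpha> - 1)) = ennreal (ns * T) * ennreal (r powr (- \<alpha> - 1))"
          using ns T_pos by (simp add: ennreal_mult)
        have "(\<integral>\<^sup>+s. indicator A (r *\<^sub>R u) * ennreal (exp (- s * r powr p))
            * ennreal (ns * T * r powr (- \<alpha> - 1)) * indicator {0<..} r \<partial>Qk u)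
          = (\<integral>\<^sup>+s. (ennreal (ns * T) * (indicator A (r *\<^sub>R u) * ennreal (r powr (- \<alpha> - 1)) * indicator {0<..} r)) * ennreal (exp (- s * r powr p)) \<partial>Qk u)"
          unfolding e by (intro nn_integral_cong) (simp add: mult_ac)
        also have "\<dots> = (ennreal (ns * T) * (indicator A (r *\<^sub>R u) * ennreal (r powr (- \<alpha> - 1)) * indicator {0<..} r)) * Jp (u, r)"
          unfolding Jp_def by (subst nn_integral_cmult) (simp_all add: measurable_cong_sets[OF Qsu refl])
        finally show ?thesis by (simp add: mult_ac)
      qed
      have d: "(\<integral>\<^sup>+r. ennreal (ns * T) * (indicator A (r *\<^sub>R u) * ennreal (r powr (- \<alpha> - 1)) * indicator {0<..} r * Jp (u, r)) \<partial>lborel)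
          = ennreal (ns * T) * L' u"
        unfolding L'_def by (rule nn_integral_cmult) (rule X_meas)
      have e: "L' u = L u"
        unfolding L'_def L_def
      proof (intro nn_integral_cong)
        fix r :: real
        have int: "integrable (Qk u) (\<lambda>s. exp (- (s * r powr p)))"
        proof (rule Q.integrable_const_bound[where B=1])
          show "AE s in Qk u. norm (exp (- (s * r powr p))) \<le> 1"
            using Qpos by eventually_elim simp
        qed (simp add: measurable_cong_sets[OF Qsu refl])
        have q: "Jp (u, r) = ennreal (qlap Qk (r powr p) u)"
        proof -
          have "Jp (u, r) = (\<integral>\<^sup>+s. ennreal (exp (- (s * r powr p))) \<partial>Qk u)" by (simp add: Jp_def)
          also have "\<dots> = ennreal (\<integral>s. exp (- (s * r powr p)) \<partial>Qk u)"
            by (rule nn_integral_eq_integral[OF int]) simp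
          also have "(\<integral>s. exp (- (s * r powr p)) \<partial>Qk u) = qlap Qk (r powr p) u"
            unfolding qlap_def by (simp add: mult.commute)
          finally show ?thesis .
        qed
        have qn: "qlap Qk (r powr p) u \<ge> 0" unfolding qlap_def by simp
        show "indicator A (r *\<^sub>R u) * ennreal (r powr (- \<alpha> - 1)) * indicator {0<..} r * Jp (u, r)
            = indicator A (r *\<^sub>R u) * ennreal (qlap Qk (r powr p) u * r powr (- \<alpha> - 1)) * indicator {0<..} r"
          unfolding q using qn by (simp add: ennreal_mult mult_ac)
      qed
      show ?thesis using a b c d e by simp
    qed
    have "(\<integral>\<^sup>+v. G3 v \<partial>Qnormalized \<sigma> Qk) = ennreal (1 / ns) * (\<integral>\<^sup>+u. (\<integral>\<^sup>+s. G3 (s *\<^sub>R u) \<partial>Qk u) \<partial>\<sigma>)"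
      unfolding ns_def by (rule Qnorm_integral[OF sigma_sets sigma_finite sigma_nonzero Qk_meas G3_meas])
    also have "(\<integral>\<^sup>+u. (\<integral>\<^sup>+s. G3 (s *\<^sub>R u) \<partial>Qk u) \<partial>\<sigma>) = (\<integral>\<^sup>+u. ennreal (ns * T) * L' u \<partial>\<sigma>)"
      by (rule nn_integral_cong_AE) (use sphAE key in auto)
    also have "\<dots> = ennreal (ns * T) * (\<integral>\<^sup>+u. L' u \<partial>\<sigma>)"
      by (rule nn_integral_cmult) simp
    also have "(\<integral>\<^sup>+u. L' u \<partial>\<sigma>) = (\<integral>\<^sup>+u. L u \<partial>\<sigma>)"
      by (rule nn_integral_cong_AE) (use sphAE key in auto)
    also have "(\<integral>\<^sup>+u. L u \<partial>\<sigma>) = levyM \<sigma> Qk p \<alpha> A"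
      by (simp add: L_def levyM_def)
    finally show ?thesis .
  qed
  have "ennreal (t / T) * (ennreal (1 / ns) * (ennreal (ns * T) * levyM \<sigma> Qk p \<alpha> A)) = ennreal t * levyM \<sigma> Qk p \<alpha> A"
  proof -
    have "ennreal (t / T) * (ennreal (1 / ns) * ennreal (ns * T)) = ennreal t"
      using ns T_pos t by (simp add: ennreal_mult[symmetric])
    then show ?thesis by (metis mult.assoc)
  qed
  then show ?thesis using step1 step2 step3 step4 by (simp add: ns_def)
qed

end
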